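(* For each integer $p\ge 2$ there is a constant $C_p>0$ such that for arbitrarily large $n$ (i.e. for infinitely many positive integers $n$) there exists a $(p-1)$-dimensional simplicial complex $\Gamma$ with $n$ vertices satisfying $\mathrm{gr}_{p-1}(\Gamma)>2p$ and $f_{p-1}(\Gamma)\ge C_p\,n^{\,p-\frac{p}{2^p-1}}$.
   Context: A simplicial complex $\Gamma$ on a finite vertex set $V=V(\Gamma)$ is a family of subsets of $V$ (faces) closed under taking subsets; its dimension is $\max\{|F|:F\in\Gamma\}-1$; $f_j(\Gamma)$ is the number of faces with $j+1$ elements. For $W\subseteq V$, $\Gamma[W]=\{F\in\Gamma:F\subseteq W\}$; for a face $F$ (possibly empty), $\mathrm{lk}_\Gamma(F)=\{G\setminus F: F\subseteq G\in\Gamma\}$. Fix a field $\mathbf{k}$; $\tilde H_j(\cdot;\mathbf{k})$ is reduced simplicial homology. The $(p-1)$-girth is $\mathrm{gr}_{p-1}(\Gamma)=\min\{|W|: W\subseteq V(\Gamma),\ \tilde H_{p-1}(\mathrm{lk}_\Gamma(F)[W];\mathbf{k})\neq 0 \text{ for some face } F\in\Gamma \text{ (including } F=\emptyset)\}$, or $\infty$ if none exists. *)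

theory Defs
  imports Main "HOL-Library.Extended_Nat"
begin

definition simplicial_complex :: "nat set set \<Rightarrow> bool" where
  "simplicial_complex \<Gamma> \<longleftrightarrow> finite \<Gamma> \<and> (\<forall>F\<in>\<Gamma>. finite F) \<and> (\<forall>F\<in>\<Gamma>. \<forall>G. G \<subseteq> F \<longrightarrow> G \<in> \<Gamma>)"

definition verts :: "nat set set \<Rightarrow> nat set" where
  "verts \<Gamma> = \<Union>\<Gamma>"

text \<open>Number of faces with exactly k elements, so f_j = num_faces \<Gamma> (j+1).\<close>
definition num_faces :: "nat set set \<Rightarrow> nat \<Rightarrow> nat" where
  "num_faces \<Gamma> k = card {F \<in> \<Gamma>. card F = k}"

definition has_dim :: "nat set set \<Rightarrow> nat \<Rightarrow> bool" where
  "has_dim \<Gamma> d \<longleftrightarrow> (\<forall>F\<in>\<Gamma>. card F \<le> d + 1) \<and> (\<exists>F\<in>\<Gamma>. card F = d + 1)"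

definition induced :: "nat set set \<Rightarrow> nat set \<Rightarrow> nat set set" where
  "induced \<Gamma> W = {F \<in> \<Gamma>. F \<subseteq> W}"

definition link :: "nat set set \<Rightarrow> nat set \<Rightarrow> nat set set" where
  "link \<Gamma> F = {G - F | G. G \<in> \<Gamma> \<and> F \<subseteq> G}"

text \<open>Simplicial chains with coefficients in the field 'k: a j-chain is a function on
faces supported on the faces with j+1 elements; faces are oriented by the natural
order of the vertices. Boundary map (augmented, so that homology is reduced):
the coefficient of the face G (|G| = j) in the boundary of a j-chain c is
sum over v with G \<union> {v} a face of (-1)^(position of v in G \<union> {v}) * c(G \<union> {v}).\<close>

definition is_chain :: "'k::field itself \<Rightarrow> nat set set \<Rightarrow> nat \<Rightarrow> (nat set \<Rightarrow> 'k) \<Rightarrow> bool" where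
  "is_chain _ \<Gamma> j c \<longleftrightarrow> (\<forall>F. c F \<noteq> 0 \<longrightarrow> F \<in> \<Gamma> \<and> card F = j + 1)"

definition bdry :: "nat set set \<Rightarrow> (nat set \<Rightarrow> 'k::field) \<Rightarrow> nat set \<Rightarrow> 'k" where
  "bdry \<Gamma> c G = (\<Sum>v \<in> {v. v \<notin> G \<and> insert v G \<in> \<Gamma>}.
       (-1) ^ card {u \<in> G. u < v} * c (insert v G))"

definition red_homology_nonzero :: "'k::field itself \<Rightarrow> nat set set \<Rightarrow> nat \<Rightarrow> bool" where
  "red_homology_nonzero K \<Gamma> j \<longleftrightarrow>
     (\<exists>c :: nat set \<Rightarrow> 'k. is_chain K \<Gamma> j c
        \<and> (\<forall>G. card G = j \<longrightarrow> bdry \<Gamma> c G = 0)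
        \<and> \<not> (\<exists>b :: nat set \<Rightarrow> 'k. is_chain K \<Gamma> (Suc j) b
               \<and> (\<forall>G. card G = j + 1 \<longrightarrow> c G = bdry \<Gamma> b G)))"

definition girth :: "'k::field itself \<Rightarrow> nat set set \<Rightarrow> nat \<Rightarrow> enat" where
  "girth K \<Gamma> j =
     (if \<exists>W. W \<subseteq> verts \<Gamma> \<and> (\<exists>F\<in>\<Gamma>. red_homology_nonzero K (induced (link \<Gamma> F) W) j)
      then enat (LEAST m. \<exists>W. W \<subseteq> verts \<Gamma> \<and> card W = m \<and>
                   (\<exists>F\<in>\<Gamma>. red_homology_nonzero K (induced (link \<Gamma> F) W) j))
      else \<infinity>)"

end

theory Submission
  imports Defs "HOL-Library.FuncSet"
begin


lemma weight_sub:
  fixes q :: real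
  assumes "finite S" "A \<subseteq> S"
  shows "(\<Sum>E\<in>Pow S. (if A \<subseteq> E then q ^ card E * (1-q) ^ card (S-E) else 0)) = q ^ card A"
proof -
  have e1: "(\<Prod>x\<in>S. q + (if x \<in> A then 0 else 1-q)) =
    (\<Sum>X\<in>Pow S. (\<Prod>x\<in>X. q) * (\<Prod>x\<in>S-X. (if x \<in> A then 0 else 1-q)))"
    by (rule prod_add[OF assms(1)])
  have e2: "(\<Prod>x\<in>S. q + (if x \<in> A then 0 else 1-q)) = (\<Prod>x\<in>S. (if x \<in> A then q else 1))"
    by (rule prod.cong) auto
  have e3: "(\<Prod>x\<in>S. (if x \<in> A then q else 1)) = q ^ card A"
  proof -
    have "(\<Prod>x\<in>S. (if x \<in> A then q else 1)) = (\<Prod>x\<in>S \<inter> A. q)"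
      using prod.inter_restrict[OF assms(1), of "\<lambda>_. q" A] by simp
    also have "S \<inter> A = A" using assms by auto
    finally show ?thesis by simp
  qed
  have e4: "(\<Prod>x\<in>X. q) * (\<Prod>x\<in>S-X. (if x \<in> A then 0 else 1-q)) =
      (if A \<subseteq> X then q ^ card X * (1-q) ^ card (S-X) else 0)" if "X \<in> Pow S" for X
  proof (cases "A \<subseteq> X")
    case True
    then have "(\<Prod>x\<in>S-X. (if x \<in> A then 0 else 1-q)) = (\<Prod>x\<in>S-X. 1-q)"
      by (intro prod.cong) auto
    then show ?thesis using True by simp
  next
    case False
    then obtain y where "y \<in> A" "y \<notin> X" by auto
    then have "y \<in> S - X" using assms by auto
    moreover have "finite (S - X)" using assms by auto
    ultimately have "(\<Prod>x\<in>S-X. (if x \<in> A then 0 else 1-q)) = 0"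
      using \<open>y \<in> A\<close> by (intro prod_zero) auto
    then show ?thesis using False by simp
  qed
  have "(\<Sum>X\<in>Pow S. (\<Prod>x\<in>X. q) * (\<Prod>x\<in>S-X. (if x \<in> A then 0 else 1-q)))
     = (\<Sum>E\<in>Pow S. (if A \<subseteq> E then q ^ card E * (1-q) ^ card (S-E) else 0))"
    by (rule sum.cong) (simp_all only: e4)
  then show ?thesis using e1 e2 e3 by simp
qed

definition Ug :: "nat \<Rightarrow> nat \<Rightarrow> (nat \<Rightarrow> nat) set" where
  "Ug p m = PiE {..<p} (\<lambda>_. {..<m})"
definition Kc :: "nat \<Rightarrow> (nat \<Rightarrow> nat) \<Rightarrow> (nat \<Rightarrow> nat) \<Rightarrow> (nat \<Rightarrow> nat) set" where
  "Kc p a b = PiE {..<p} (\<lambda>i. {a i, b i})"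
definition Prs :: "nat \<Rightarrow> nat \<Rightarrow> ((nat \<Rightarrow> nat) \<times> (nat \<Rightarrow> nat)) set" where
  "Prs p m = {(a,b). a \<in> Ug p m \<and> b \<in> Ug p m \<and> (\<forall>i<p. a i < b i)}"

lemma card_Ug: "card (Ug p m) = m ^ p" by (simp add: Ug_def card_PiE)
lemma finite_Ug: "finite (Ug p m)" by (simp add: Ug_def finite_PiE)
lemma card_Kc: assumes "\<forall>i<p. a i < b i" shows "card (Kc p a b) = 2 ^ p"
proof -
  have "card (Kc p a b) = (\<Prod>i<p. card {a i, b i})" by (simp add: Kc_def card_PiE)
  also have "\<dots> = (\<Prod>i<p. 2)" using assms by (intro prod.cong) auto
  finally show ?thesis by simp
qed
lemma Kc_sub: assumes "(a,b) \<in> Prs p m" shows "Kc p a b \<subseteq> Ug p m"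
  using assms unfolding Prs_def Kc_def Ug_def by (auto simp: PiE_iff) (metis lessThan_iff)
lemma finite_Prs: "finite (Prs p m)"
proof -
  have "Prs p m \<subseteq> Ug p m \<times> Ug p m" by (auto simp: Prs_def)
  then show ?thesis using finite_Ug by (meson finite_SigmaI finite_subset)
qed
lemma card_Prs: "card (Prs p m) \<le> m ^ (2*p)"
proof -
  have "Prs p m \<subseteq> Ug p m \<times> Ug p m" by (auto simp: Prs_def)
  then have "card (Prs p m) \<le> card (Ug p m \<times> Ug p m)"
    using finite_Ug by (intro card_mono) auto
  also have "\<dots> = m ^ (2*p)" by (simp add: card_cartesian_product card_Ug power_mult_distrib mult_2 power_add)
  finally show ?thesis .
qed

lemma exists_good:
  fixes q :: real
  assumes q: "0 \<le> q" "q \<le> 1"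
  shows "\<exists>E \<subseteq> Ug p m. real (card E) - real (card {x \<in> Prs p m. Kc p (fst x) (snd x) \<subseteq> E})
            \<ge> q * real m ^ p - real m ^ (2*p) * q ^ (2^p)"
proof -
  define U where "U = Ug p m"
  define w where "w E = q ^ card E * (1-q) ^ card (U-E)" for E
  define N where "N E = card {x \<in> Prs p m. Kc p (fst x) (snd x) \<subseteq> E}" for E
  define X where "X E = real (card E) - real (N E)" for E
  have fU: "finite U" by (simp add: U_def finite_Ug)
  have w0: "w E \<ge> 0" for E using q by (simp add: w_def)
  have h1: "(\<Sum>E\<in>Pow U. w E) = 1"
    using weight_sub[OF fU, of "{}" q] by (simp add: w_def)
  have h2: "(\<Sum>E\<in>Pow U. w E * real (card E)) = q * real m ^ p"
  proof -
    have "(\<Sum>E\<in>Pow U. w E * real (card E)) = (\<Sum>E\<in>Pow U. \<Sum>u\<in>U. (if {u} \<subseteq> E then w E else 0))"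
    proof (rule sum.cong)
      fix E assume "E \<in> Pow U"
      then have "E = U \<inter> E" by auto
      then have "real (card E) = (\<Sum>u\<in>U. (if u \<in> E then 1 else 0))"
        using sum.inter_restrict[OF fU, of "\<lambda>_. (1::real)" E] by simp
      then show "w E * real (card E) = (\<Sum>u\<in>U. (if {u} \<subseteq> E then w E else 0))"
        by (simp add: sum_distrib_left if_distrib cong: if_cong)
    qed simp
    also have "\<dots> = (\<Sum>u\<in>U. \<Sum>E\<in>Pow U. (if {u} \<subseteq> E then w E else 0))" by (rule sum.swap)
    also have "\<dots> = (\<Sum>u\<in>U. q)"
    proof (rule sum.cong)
      fix u assume "u \<in> U"
      then show "(\<Sum>E\<in>Pow U. (if {u} \<subseteq> E then w E else 0)) = q"
        using weight_sub[OF fU, of "{u}" q] unfolding w_def by simp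
    qed simp
    also have "\<dots> = q * real m ^ p" using card_Ug[of p m] by (simp add: U_def)
    finally show ?thesis .
  qed
  have h3: "(\<Sum>E\<in>Pow U. w E * real (N E)) = real (card (Prs p m)) * q ^ (2^p)"
  proof -
    have "(\<Sum>E\<in>Pow U. w E * real (N E)) =
       (\<Sum>E\<in>Pow U. \<Sum>x\<in>Prs p m. (if Kc p (fst x) (snd x) \<subseteq> E then w E else 0))"
    proof (rule sum.cong)
      fix E
      have "real (N E) = (\<Sum>x\<in>Prs p m. (if Kc p (fst x) (snd x) \<subseteq> E then 1 else 0))"
        unfolding N_def using sum.inter_filter[OF finite_Prs, of "\<lambda>_. (1::real)"] by simp
      then show "w E * real (N E) = (\<Sum>x\<in>Prs p m. (if Kc p (fst x) (snd x) \<subseteq> E then w E else 0))"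
        by (simp add: sum_distrib_left if_distrib cong: if_cong)
    qed simp
    also have "\<dots> = (\<Sum>x\<in>Prs p m. \<Sum>E\<in>Pow U. (if Kc p (fst x) (snd x) \<subseteq> E then w E else 0))"
      by (rule sum.swap)
    also have "\<dots> = (\<Sum>x\<in>Prs p m. q ^ (2^p))"
    proof (rule sum.cong)
      fix x assume x: "x \<in> Prs p m"
      obtain a b where ab: "x = (a,b)" by fastforce
      have "(\<Sum>E\<in>Pow U. (if Kc p a b \<subseteq> E then w E else 0)) = q ^ card (Kc p a b)"
      proof -
        have "Kc p a b \<subseteq> U" using Kc_sub[of a b p m] x ab by (simp add: U_def)
        from weight_sub[OF fU this, of q] show ?thesis unfolding w_def by simp
      qed
      also have "card (Kc p a b) = 2^p" using x ab by (intro card_Kc) (auto simp: Prs_def)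
      finally show "(\<Sum>E\<in>Pow U. (if Kc p (fst x) (snd x) \<subseteq> E then w E else 0)) = q ^ (2^p)"
        using ab by simp
    qed simp
    finally show ?thesis by simp
  qed
  have fP: "finite (Pow U)" using fU by simp
  have ne: "X ` Pow U \<noteq> {}" by auto
  obtain E0 where E0a: "E0 \<in> Pow U" "X E0 = Max (X ` Pow U)"
    using Max_in[OF finite_imageI[OF fP] ne] by auto
  have E0: "E0 \<in> Pow U" "\<And>E. E \<in> Pow U \<Longrightarrow> X E \<le> X E0"
    using E0a fP by auto
  have "(\<Sum>E\<in>Pow U. w E * X E) = q * real m ^ p - real (card (Prs p m)) * q ^ (2^p)"
    using h2 h3 by (simp add: X_def right_diff_distrib sum_subtractf)
  also have "\<dots> \<ge> q * real m ^ p - real m ^ (2*p) * q ^ (2^p)"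
    using card_Prs[of p m] q by (intro diff_left_mono mult_right_mono) (auto simp del: of_nat_power simp: of_nat_power[symmetric])
  moreover have "(\<Sum>E\<in>Pow U. w E * X E) \<le> (\<Sum>E\<in>Pow U. w E * X E0)"
    using E0 w0 by (intro sum_mono mult_left_mono) auto
  moreover have "(\<Sum>E\<in>Pow U. w E * X E0) = X E0" using h1 by (simp add: sum_distrib_right[symmetric])
  ultimately have "X E0 \<ge> q * real m ^ p - real m ^ (2*p) * q ^ (2^p)" by linarith
  then show ?thesis using E0(1) unfolding X_def N_def U_def by blast
qed



definition eo :: "nat \<Rightarrow> (nat \<Rightarrow> nat) \<Rightarrow> nat set" where
  "eo p f = (\<lambda>i. f i * p + i) ` {..<p}"
definition cplx :: "nat \<Rightarrow> nat \<Rightarrow> (nat \<Rightarrow> nat) set \<Rightarrow> nat set set" where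
  "cplx p n E = {F. \<exists>e \<in> eo p ` E \<union> (\<lambda>v. {v}) ` {..<n}. F \<subseteq> e}"

lemma enc_eq: fixes x y i j p :: nat assumes "i < p" "j < p" "x * p + i = y * p + j" shows "x = y \<and> i = j"
proof -
  have "i = (x*p+i) mod p" using assms(1) by simp
  also have "\<dots> = (y*p+j) mod p" using assms(3) by simp
  also have "\<dots> = j" using assms(2) by simp
  finally have 1: "i = j" .
  have "x = (x*p+i) div p" using assms(1) by simp
  also have "\<dots> = (y*p+j) div p" using assms(3) by simp
  also have "\<dots> = y" using assms(2) by simp
  finally show ?thesis using 1 by simp
qed

lemma inj_eo: fixes f :: "nat \<Rightarrow> nat" and p :: nat shows "inj_on (\<lambda>i. f i * p + i) {..<p}"
proof (rule inj_onI)
  fix x y assume "x \<in> {..<p}" "y \<in> {..<p}" "f x * p + x = f y * p + y"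
  then show "x = y" using enc_eq[of x p y "f x" "f y"] by simp
qed

lemma card_eo: "card (eo p f) = p"
  unfolding eo_def using card_image[OF inj_eo, of f p] by simp

lemma eo_inj: assumes "f \<in> Ug p m" "g \<in> Ug p m" "eo p f = eo p g" shows "f = g"
proof
  fix i show "f i = g i"
  proof (cases "i < p")
    case True
    then have "f i * p + i \<in> eo p g" using assms(3) by (auto simp: eo_def)
    then obtain j where "j < p" "f i * p + i = g j * p + j" by (auto simp: eo_def)
    then show ?thesis using enc_eq[OF True] by blast
  next
    case False
    then show ?thesis using assms(1,2) by (auto simp: Ug_def PiE_def extensional_def)
  qed
qed

lemma eo_sub: assumes "f \<in> Ug p m" shows "eo p f \<subseteq> {..<p*m}"
proof
  fix v assume "v \<in> eo p f"
  then obtain i where i: "i < p" "v = f i * p + i" by (auto simp: eo_def)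
  have "f i < m" using assms i by (auto simp: Ug_def PiE_iff)
  then have "f i + 1 \<le> m" by simp
  then have "(f i + 1) * p \<le> m * p" by (rule mult_right_mono) simp
  then show "v \<in> {..<p*m}" using i by (simp add: algebra_simps)
qed

lemma face_p:
  assumes "E \<subseteq> Ug p m" "p \<ge> 2" "F \<in> cplx p n E" "card F = p"
  shows "\<exists>f\<in>E. F = eo p f"
proof -
  obtain e where e: "e \<in> eo p ` E \<union> (\<lambda>v. {v}) ` {..<n}" "F \<subseteq> e"
    using assms(3) by (auto simp: cplx_def)
  show ?thesis
  proof (cases "e \<in> eo p ` E")
    case True
    then obtain f where f: "f \<in> E" "e = eo p f" by auto
    have "finite e" using f card_eo[of p f] assms(2) by (metis card.infinite not_numeral_le_zero)
    then have "F = e" using card_subset_eq[OF _ e(2)] f assms(4) card_eo by metis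
    then show ?thesis using f by auto
  next
    case False
    then obtain v where "e = {v}" using e by auto
    then have "card F \<le> 1" using e(2) using card_mono[of "{v}" F] by simp
    then show ?thesis using assms by simp
  qed
qed

lemma cplx_basic:
  assumes "E \<subseteq> Ug p m" "p \<ge> 2" "E \<noteq> {}" "n = p * m"
  shows "simplicial_complex (cplx p n E)" "verts (cplx p n E) = {..<n}"
    "has_dim (cplx p n E) (p - 1)" "num_faces (cplx p n E) p = card E"
proof -
  define Gs where "Gs = eo p ` E \<union> (\<lambda>v. {v}) ` {..<n}"
  have fE: "finite E" using assms(1) finite_Ug finite_subset by blast
  have fG: "finite Gs" using fE by (simp add: Gs_def)
  have fg: "\<And>e. e \<in> Gs \<Longrightarrow> finite e"
    using card_eo assms(2) by (auto simp: Gs_def) (metis card.infinite not_numeral_le_zero)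
  have C: "cplx p n E = (\<Union>e\<in>Gs. Pow e)" by (auto simp: cplx_def Gs_def)
  show "simplicial_complex (cplx p n E)"
    unfolding simplicial_complex_def C using fG fg by (auto intro: finite_subset)
  show "verts (cplx p n E) = {..<n}"
  proof
    show "verts (cplx p n E) \<subseteq> {..<n}"
      unfolding verts_def C Gs_def using eo_sub assms by fastforce
    show "{..<n} \<subseteq> verts (cplx p n E)"
      unfolding verts_def C Gs_def by blast
  qed
  have cardle: "card F \<le> p" if "F \<in> cplx p n E" for F
  proof -
    have "F \<in> (\<Union>e\<in>Gs. Pow e)" using that C by simp
    then obtain e where e: "e \<in> Gs" "F \<subseteq> e" by auto
    have "card F \<le> card e" using fg[OF e(1)] e(2) by (rule card_mono)
    moreover have "card e \<le> p" using e(1) card_eo assms(2) by (auto simp: Gs_def)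
    ultimately show ?thesis by simp
  qed
  obtain f where f: "f \<in> E" using assms(3) by auto
  have "eo p f \<in> cplx p n E" using f by (auto simp: cplx_def)
  then show "has_dim (cplx p n E) (p - 1)"
    unfolding has_dim_def using cardle assms(2) card_eo[of p f] by force
  have "{F \<in> cplx p n E. card F = p} = eo p ` E"
  proof
    show "{F \<in> cplx p n E. card F = p} \<subseteq> eo p ` E"
      using face_p[OF assms(1,2)] by blast
    show "eo p ` E \<subseteq> {F \<in> cplx p n E. card F = p}"
      using card_eo by (auto simp: cplx_def)
  qed
  moreover have "inj_on (eo p) E" using eo_inj assms(1) by (meson inj_onI subsetD)
  ultimately show "num_faces (cplx p n E) p = card E"
    unfolding num_faces_def by (simp add: card_image)
qed



lemma Ug_ext: "f \<in> Ug p m \<Longrightarrow> \<not> i < p \<Longrightarrow> f i = undefined"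
  by (auto simp: Ug_def PiE_def extensional_def)

lemma flip:
  fixes c :: "nat set \<Rightarrow> 'k::field"
  assumes E: "E \<subseteq> Ug p m" "p \<ge> 2" and fW: "finite W"
    and ch: "is_chain K (induced (cplx p n E) W) (p-1) c"
    and cyc: "\<forall>G. card G = p-1 \<longrightarrow> bdry (induced (cplx p n E) W) c G = 0"
    and f: "f \<in> E" "c (eo p f) \<noteq> 0" and i: "i < p"
  shows "\<exists>g\<in>E. c (eo p g) \<noteq> 0 \<and> g i \<noteq> f i \<and> (\<forall>j. j \<noteq> i \<longrightarrow> g j = f j)"
proof (rule ccontr)
  assume H: "\<not> ?thesis"
  define GW where "GW = induced (cplx p n E) W"
  have chn: "c X \<noteq> 0 \<Longrightarrow> X \<in> GW \<and> card X = p" for X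
    using ch E(2) unfolding is_chain_def GW_def by auto
  define v0 where "v0 = f i * p + i"
  define G where "G = eo p f - {v0}"
  have v0e: "v0 \<in> eo p f" using i by (auto simp: v0_def eo_def)
  have fin: "finite (eo p f)" using card_eo[of p f] E(2) by (metis card.infinite not_numeral_le_zero)
  have cG: "card G = p - 1" using v0e fin card_eo[of p f] by (simp add: G_def)
  have ins0: "insert v0 G = eo p f" using v0e by (auto simp: G_def)
  define IS where "IS = {v. v \<notin> G \<and> insert v G \<in> GW}"
  have fIS: "finite IS"
  proof (rule finite_subset[OF _ fW])
    show "IS \<subseteq> W" by (auto simp: IS_def GW_def induced_def)
  qed
  have v0IS: "v0 \<in> IS" using chn[OF f(2)] ins0 by (auto simp: IS_def G_def)
  have zero: "c (insert v G) = 0" if v: "v \<in> IS - {v0}" for v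
  proof (rule ccontr)
    assume nz: "c (insert v G) \<noteq> 0"
    then have "insert v G \<in> GW" "card (insert v G) = p" using chn by auto
    then have "insert v G \<in> cplx p n E" by (auto simp: GW_def induced_def)
    then obtain g where g: "g \<in> E" "insert v G = eo p g"
      using face_p[OF E] \<open>card (insert v G) = p\<close> by blast
    have gU: "g \<in> Ug p m" "f \<in> Ug p m" using g f E by auto
    have agree: "g j = f j" if "j \<noteq> i" for j
    proof (cases "j < p")
      case True
      have "f j * p + j \<noteq> v0" using enc_eq[OF True i] that by (auto simp: v0_def)
      moreover have "f j * p + j \<in> eo p f" using True by (auto simp: eo_def)
      ultimately have "f j * p + j \<in> eo p g" using g(2) by (auto simp: G_def)
      then obtain j' where "j' < p" "f j * p + j = g j' * p + j'" by (auto simp: eo_def)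
      then show ?thesis using enc_eq[OF True] by metis
    next
      case False then show ?thesis using Ug_ext gU by metis
    qed
    have "g i \<noteq> f i"
    proof
      assume "g i = f i"
      then have "g = f" using agree by (metis ext)
      then have "v \<in> insert v0 G" using g(2) ins0 by auto
      then show False using v by (auto simp: IS_def)
    qed
    then show False using H g agree nz by auto
  qed
  have "bdry GW c G = (\<Sum>v\<in>IS. (-1) ^ card {u \<in> G. u < v} * c (insert v G))"
    by (simp add: bdry_def IS_def)
  also have "\<dots> = (-1) ^ card {u \<in> G. u < v0} * c (insert v0 G)
      + (\<Sum>v\<in>IS - {v0}. (-1) ^ card {u \<in> G. u < v} * c (insert v G))"
    by (rule sum.remove[OF fIS v0IS])
  also have "(\<Sum>v\<in>IS - {v0}. (-1) ^ card {u \<in> G. u < v} * c (insert v G)) = 0"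
    using zero by (intro sum.neutral) auto
  finally have "bdry GW c G = (-1) ^ card {u \<in> G. u < v0} * c (eo p f)" using ins0 by simp
  moreover have "(-1) ^ card {u \<in> G. u < v0} * c (eo p f) \<noteq> 0" using f(2) by simp
  ultimately show False using cyc cG by (simp add: GW_def)
qed

lemma cycle_zero:
  fixes c :: "nat set \<Rightarrow> 'k::field"
  assumes E: "E \<subseteq> Ug p m" "p \<ge> 2" and fW: "finite W" and cW: "card W \<le> 2*p"
    and Kfree: "\<forall>a b. (a,b) \<in> Prs p m \<longrightarrow> \<not> Kc p a b \<subseteq> E"
    and ch: "is_chain K (induced (cplx p n E) W) (p-1) c"
    and cyc: "\<forall>G. card G = p-1 \<longrightarrow> bdry (induced (cplx p n E) W) c G = 0"
  shows "c H = 0"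
proof (rule ccontr)
  assume nz: "c H \<noteq> 0"
  define GW where "GW = induced (cplx p n E) W"
  have chn: "c X \<noteq> 0 \<Longrightarrow> X \<in> GW \<and> card X = p" for X
    using ch E(2) unfolding is_chain_def GW_def by auto
  have "H \<in> cplx p n E" "card H = p" using chn[OF nz] by (auto simp: GW_def induced_def)
  then obtain f0 where f0: "f0 \<in> E" "H = eo p f0" using face_p[OF E] by blast
  define S where "S = {f\<in>E. c (eo p f) \<noteq> 0}"
  have f0S: "f0 \<in> S" using f0 nz by (simp add: S_def)
  have SW: "eo p f \<subseteq> W" if "f \<in> S" for f
    using chn[of "eo p f"] that by (auto simp: S_def GW_def induced_def)
  have SU: "f \<in> Ug p m" if "f \<in> S" for f using that E by (auto simp: S_def)
  have fl: "\<exists>g\<in>S. g i \<noteq> f i \<and> (\<forall>j. j \<noteq> i \<longrightarrow> g j = f j)" if "f \<in> S" "i < p" for f i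
    using flip[OF E fW ch cyc, of f i] that by (auto simp: S_def)
  have "\<forall>i. \<exists>g. i < p \<longrightarrow> g \<in> S \<and> g i \<noteq> f0 i" using fl[OF f0S] by metis
  then obtain gf where gf: "\<And>i. i < p \<Longrightarrow> gf i \<in> S \<and> gf i i \<noteq> f0 i" by metis
  define a where "a i = (if i < p then min (f0 i) (gf i i) else undefined)" for i
  define b where "b i = (if i < p then max (f0 i) (gf i i) else undefined)" for i
  have lt: "a i < b i" if "i < p" for i using gf[OF that] that by (auto simp: a_def b_def)
  have aU: "a \<in> Ug p m" and bU: "b \<in> Ug p m"
  proof -
    have "f0 i < m \<and> gf i i < m" if "i < p" for i
      using SU[OF f0S] SU gf[OF that] that by (auto simp: Ug_def PiE_iff)
    then show "a \<in> Ug p m" "b \<in> Ug p m" by (auto simp: Ug_def PiE_iff a_def b_def extensional_def min_def max_def)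
  qed
  have ab: "(a,b) \<in> Prs p m" using aU bU lt by (auto simp: Prs_def)
  have abf: "{a i, b i} = {f0 i, gf i i}" if "i < p" for i using that by (auto simp: a_def b_def)
  define V0 where "V0 = eo p a \<union> eo p b"
  have V0W: "V0 \<subseteq> W"
  proof
    fix v assume "v \<in> V0"
    then obtain i where i: "i < p" "v = a i * p + i \<or> v = b i * p + i" by (auto simp: V0_def eo_def)
    then have "v = f0 i * p + i \<or> v = gf i i * p + i" using abf[OF i(1)] by (auto simp: doubleton_eq_iff)
    moreover have "f0 i * p + i \<in> eo p f0" "gf i i * p + i \<in> eo p (gf i)" using i by (auto simp: eo_def)
    ultimately show "v \<in> W" using SW[OF f0S] SW gf[OF i(1)] by auto
  qed
  have disj: "eo p a \<inter> eo p b = {}"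
  proof (rule ccontr)
    assume "eo p a \<inter> eo p b \<noteq> {}"
    then obtain i j where "i < p" "j < p" "a i * p + i = b j * p + j" by (auto simp: eo_def)
    then show False using enc_eq lt by (metis less_irrefl)
  qed
  have fe: "finite (eo p g)" for g using card_eo[of p g] E(2) by (metis card.infinite not_numeral_le_zero)
  have "card V0 = 2 * p" using card_Un_disjoint[OF fe fe disj] card_eo by (simp add: V0_def)
  then have WV: "W = V0" using card_seteq[OF fW V0W] cW by simp
  have SK: "S \<subseteq> Kc p a b"
  proof
    fix f assume fS: "f \<in> S"
    have "f i \<in> {a i, b i}" if i: "i < p" for i
    proof -
      have "f i * p + i \<in> V0" using SW[OF fS] WV i by (auto simp: eo_def)
      then obtain j where "j < p" "f i * p + i = a j * p + j \<or> f i * p + i = b j * p + j"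
        by (auto simp: V0_def eo_def)
      then show ?thesis using enc_eq[OF i] by fastforce
    qed
    moreover have "f \<in> extensional {..<p}" using SU[OF fS] by (auto simp: Ug_def PiE_def)
    ultimately show "f \<in> Kc p a b" by (auto simp: Kc_def PiE_iff)
  qed
  define D where "D g = {i\<in>{..<p}. g i \<noteq> f0 i}" for g
  have f0K: "f0 \<in> Kc p a b" using SK f0S by auto
  have D0: "g = f0" if "g \<in> Kc p a b" "D g = {}" for g
  proof
    fix i show "g i = f0 i"
    proof (cases "i < p")
      case True then show ?thesis using that(2) by (auto simp: D_def)
    next
      case False then show ?thesis using that(1) f0K by (auto simp: Kc_def PiE_def extensional_def)
    qed
  qed
  have ind: "\<forall>g\<in>Kc p a b. card (D g) \<le> k \<longrightarrow> g \<in> S" for k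
  proof (induction k)
    case 0
    have "finite (D g)" for g by (simp add: D_def)
    then show ?case using D0 f0S by auto
  next
    case (Suc k)
    show ?case
    proof (intro ballI impI)
      fix g assume g: "g \<in> Kc p a b" "card (D g) \<le> Suc k"
      show "g \<in> S"
      proof (cases "D g = {}")
        case True then show ?thesis using D0 g f0S by auto
      next
        case False
        then obtain i where iD: "i \<in> D g" by auto
        then have i: "i < p" "g i \<noteq> f0 i" by (auto simp: D_def)
        define g' where "g' = g(i := f0 i)"
        have g'K: "g' \<in> Kc p a b" using g(1) f0K i by (auto simp: Kc_def PiE_iff g'_def extensional_def)
        have "D g' = D g - {i}" by (auto simp: D_def g'_def)
        then have "card (D g') \<le> k" using g(2) iD by (simp add: D_def)
        then have g'S: "g' \<in> S" using Suc.IH g'K by auto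
        obtain h where h: "h \<in> S" "h i \<noteq> g' i" "\<forall>j. j \<noteq> i \<longrightarrow> h j = g' j" using fl[OF g'S i(1)] by auto
        have "h i \<in> {a i, b i}" "g i \<in> {a i, b i}" "f0 i \<in> {a i, b i}"
          using SK h(1) g(1) f0K i by (auto simp: Kc_def PiE_iff)
        moreover have "h i \<noteq> f0 i" using h(2) by (simp add: g'_def)
        ultimately have "h i = g i" using i(2) by auto
        then have "h = g" using h(3) by (metis ext fun_upd_other g'_def)
        then show ?thesis using h(1) by simp
      qed
    qed
  qed
  have "Kc p a b \<subseteq> S"
  proof
    fix g assume g: "g \<in> Kc p a b"
    have "card (D g) \<le> card {..<p}" by (rule card_mono) (auto simp: D_def)
    then show "g \<in> S" using ind[of p] g by simp
  qed
  then have "Kc p a b \<subseteq> E" by (auto simp: S_def)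
  then show False using Kfree ab by blast
qed



lemma deletion:
  assumes "E \<subseteq> Ug p m"
  shows "\<exists>E'\<subseteq>E. real (card E') \<ge> real (card E) - real (card {x \<in> Prs p m. Kc p (fst x) (snd x) \<subseteq> E})
     \<and> (\<forall>a b. (a,b) \<in> Prs p m \<longrightarrow> \<not> Kc p a b \<subseteq> E')"
proof -
  define Q where "Q = {x \<in> Prs p m. Kc p (fst x) (snd x) \<subseteq> E}"
  define R where "R = fst ` Q"
  define E' where "E' = E - R"
  have fE: "finite E" using assms finite_Ug finite_subset by blast
  have fQ: "finite Q" using finite_Prs by (simp add: Q_def)
  have "card R \<le> card Q" unfolding R_def by (rule card_image_le[OF fQ])
  moreover have "card E \<le> card E' + card R"
  proof -
    have "card E \<le> card (E' \<union> R)" using fE fQ by (intro card_mono) (auto simp: E'_def R_def)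
    also have "\<dots> \<le> card E' + card R" by (rule card_Un_le)
    finally show ?thesis .
  qed
  ultimately have c: "real (card E') \<ge> real (card E) - real (card Q)" by simp
  have kf: "\<not> Kc p a b \<subseteq> E'" if ab: "(a,b) \<in> Prs p m" for a b
  proof
    assume K: "Kc p a b \<subseteq> E'"
    then have "(a,b) \<in> Q" using ab by (auto simp: Q_def E'_def)
    then have "a \<in> R" by (force simp: R_def)
    moreover have "a \<in> Kc p a b" using ab by (auto simp: Prs_def Ug_def Kc_def PiE_iff)
    ultimately show False using K by (auto simp: E'_def)
  qed
  show ?thesis using c kf by (intro exI[of _ E']) (auto simp: E'_def Q_def)
qed

lemma girth_big:
  assumes E: "E \<subseteq> Ug p m" "p \<ge> 2" "E \<noteq> {}" "n = p * m"
    and Kfree: "\<forall>a b. (a,b) \<in> Prs p m \<longrightarrow> \<not> Kc p a b \<subseteq> E"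
  shows "girth TYPE('k::field) (cplx p n E) (p-1) > enat (2*p)"
proof -
  define \<Gamma> where "\<Gamma> = cplx p n E"
  note B = cplx_basic[OF E, folded \<Gamma>_def]
  have key: "card W > 2*p" if W: "W \<subseteq> verts \<Gamma>" "F \<in> \<Gamma>"
      "red_homology_nonzero TYPE('k) (induced (link \<Gamma> F) W) (p-1)" for W F
  proof (rule ccontr)
    assume "\<not> card W > 2*p"
    then have cW: "card W \<le> 2*p" by simp
    have fW: "finite W" using W(1) B(2) finite_subset by auto
    obtain c :: "nat set \<Rightarrow> 'k" where ch: "is_chain TYPE('k) (induced (link \<Gamma> F) W) (p-1) c"
      and cyc: "\<forall>G. card G = p-1 \<longrightarrow> bdry (induced (link \<Gamma> F) W) c G = 0"
      and nb: "\<not> (\<exists>b :: nat set \<Rightarrow> 'k. is_chain TYPE('k) (induced (link \<Gamma> F) W) (Suc (p-1)) b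
               \<and> (\<forall>G. card G = p-1 + 1 \<longrightarrow> c G = bdry (induced (link \<Gamma> F) W) b G))"
      using W(3) unfolding red_homology_nonzero_def by blast
    have cz: "c H = 0" for H
    proof (cases "F = {}")
      case True
      have "link \<Gamma> F = \<Gamma>" using True by (auto simp: link_def)
      then show ?thesis using cycle_zero[OF E(1,2) fW cW Kfree, of "TYPE('k)" n c H] ch cyc
        by (simp add: \<Gamma>_def)
    next
      case False
      show ?thesis
      proof (rule ccontr)
        assume "c H \<noteq> 0"
        then have "H \<in> link \<Gamma> F" "card H = p" using ch E(2) by (auto simp: is_chain_def induced_def)
        then obtain G where G: "H = G - F" "G \<in> \<Gamma>" "F \<subseteq> G" by (auto simp: link_def)
        have "card G \<le> p" using B(3) G(2) E(2) unfolding has_dim_def by (metis Suc_diff_1 Suc_eq_plus1 less_le_trans pos2)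
        moreover have "finite G" using B(1) G(2) by (auto simp: simplicial_complex_def)
        moreover have "card F \<ge> 1" using False G(3) \<open>finite G\<close>
          by (metis One_nat_def Suc_leI card_gt_0_iff finite_subset)
        moreover have "card H = card G - card F"
          using G card_Diff_subset[of F G] \<open>finite G\<close> finite_subset by blast
        ultimately have "card H < p" using E(2) by linarith
        then show False using \<open>card H = p\<close> by simp
      qed
    qed
    have "is_chain TYPE('k) (induced (link \<Gamma> F) W) (Suc (p-1)) (\<lambda>_. 0)" by (simp add: is_chain_def)
    moreover have "c G = bdry (induced (link \<Gamma> F) W) (\<lambda>_. 0::'k) G" for G
      using cz by (simp add: bdry_def)
    ultimately show False using nb by blast
  qed
  show ?thesis
  proof (cases "\<exists>W. W \<subseteq> verts \<Gamma> \<and> (\<exists>F\<in>\<Gamma>. red_homology_nonzero TYPE('k) (induced (link \<Gamma> F) W) (p-1))")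
    case True
    define P where "P k \<longleftrightarrow> (\<exists>W. W \<subseteq> verts \<Gamma> \<and> card W = k \<and>
                   (\<exists>F\<in>\<Gamma>. red_homology_nonzero TYPE('k) (induced (link \<Gamma> F) W) (p-1)))" for k
    have "\<exists>k. P k" using True by (auto simp: P_def)
    then have "P (LEAST k. P k)" by (rule LeastI_ex)
    then obtain W F where "W \<subseteq> verts \<Gamma>" "card W = (LEAST k. P k)" "F \<in> \<Gamma>"
      "red_homology_nonzero TYPE('k) (induced (link \<Gamma> F) W) (p-1)" unfolding P_def by blast
    then have "(LEAST k. P k) > 2*p" using key by metis
    then show ?thesis using True unfolding girth_def \<Gamma>_def[symmetric] P_def by simp
  next
    case False
    have "girth TYPE('k) \<Gamma> (p-1) = \<infinity>" unfolding girth_def using False by (simp only: if_False)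
    then show ?thesis unfolding \<Gamma>_def by simp
  qed
qed



lemma numeric:
  fixes t p k :: nat and q :: real
  assumes t: "t \<ge> 1" and k: "k = 2^p - 1" and p: "p \<ge> 2" and q: "q = 1 / (2 * real t ^ p)"
  shows "q * real (t^k) ^ p - real (t^k) ^ (2*p) * q ^ (2^p) \<ge> real (t^k) ^ p / (4 * real t ^ p)"
proof -
  define T where "T = real t"
  define M where "M = real (t^k)"
  have T: "T \<ge> 1" using t by (simp add: T_def)
  have "(2::nat)^2 \<le> 2^p" using p by (intro power_increasing) auto
  then have k1: "k \<ge> 1" using k by simp
  have Mp: "M ^ p = T ^ (p*k)" by (simp add: M_def T_def power_mult[symmetric] mult.commute)
  have qk: "q ^ k = 1 / (2^k * T^(p*k))" by (simp add: q T_def power_divide power_mult_distrib power_mult)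
  have qkM: "q ^ k * M ^ p = 1 / 2^k" using Mp qk T by simp
  have e2: "(2::nat)^p = Suc k" using k by simp
  have "M ^ (2*p) * q ^ (2^p) = q * M^p * (q^k * M^p)"
    by (simp add: e2 mult_2 power_add)
  also have "\<dots> = q * M^p / 2^k" using qkM by simp
  also have "\<dots> \<le> q * M^p / 2"
  proof -
    have "(2::real)^1 \<le> 2^k" using k1 by (intro power_increasing) auto
    moreover have "q * M^p \<ge> 0" using T by (simp add: q M_def)
    ultimately show ?thesis by (intro divide_left_mono) auto
  qed
  finally have "q * M^p - M ^ (2*p) * q ^ (2^p) \<ge> q * M^p / 2" by simp
  moreover have "q * M^p / 2 = M^p / (4 * T^p)" by (simp add: q T_def)
  ultimately show ?thesis by (simp add: M_def T_def)
qed

lemma powr_part: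
  fixes t p k :: nat
  assumes t: "t \<ge> 1" and k: "k = 2^p - 1" and p: "p \<ge> 2"
  shows "(1 / (4 * real p ^ p)) * real (p * t^k) powr (real p - real p / (2 ^ p - 1))
      \<le> real (t^k) ^ p / (4 * real t ^ p)"
proof -
  define e where "e = real p - real p / (2 ^ p - 1)"
  have kr: "(2::real)^p - 1 = real k" using k by (simp add: of_nat_diff)
  have "(2::nat)^2 \<le> 2^p" using p by (intro power_increasing) auto
  then have k1: "k \<ge> 1" using k by simp
  have e_le: "e \<le> real p" by (simp add: e_def kr)
  have T: "real t \<ge> 1" using t by simp
  have A: "real (p * t^k) powr e = real p powr e * real (t^k) powr e"
    by (simp add: powr_mult)
  have B: "real p powr e \<le> real p ^ p"
  proof -
    have "real p powr e \<le> real p powr real p" using p e_le by (intro powr_mono) auto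
    also have "\<dots> = real p ^ p" using p by (simp add: powr_realpow)
    finally show ?thesis .
  qed
  have C: "real (t^k) powr e = real t ^ (k*p - p)"
  proof -
    have "real (t^k) = real t powr real k" using T by (simp add: powr_realpow)
    then have "real (t^k) powr e = real t powr (real k * e)" by (simp add: powr_powr)
    also have "real k * e = real (k*p - p)"
      using k1 by (simp add: e_def kr of_nat_diff algebra_simps)
    also have "real t powr real (k*p - p) = real t ^ (k*p - p)" using T by (simp add: powr_realpow)
    finally show ?thesis .
  qed
  have D: "real t ^ (k*p - p) = real (t^k) ^ p / real t ^ p"
  proof -
    have "p \<le> k*p" using k1 by simp
    then have "k*p - p + p = k * p" by simp
    then have "real t ^ (k*p - p) * real t ^ p = real (t^k) ^ p" by (metis of_nat_power power_add power_mult)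
    then show ?thesis using T by (simp add: field_simps)
  qed
  have "real (p * t^k) powr e \<le> real p ^ p * (real (t^k) ^ p / real t ^ p)"
    unfolding A C D using B by (intro mult_right_mono) auto
  then show ?thesis unfolding e_def[symmetric] using p
    by (simp add: field_simps)
qed

theorem mainTheorem15:
  fixes p :: nat
  assumes "p \<ge> 2"
  shows "\<exists>C::real. C > 0 \<and> (\<forall>N::nat. \<exists>n::nat. n \<ge> N \<and> n > 0 \<and>
           (\<exists>\<Gamma>. simplicial_complex \<Gamma> \<and> has_dim \<Gamma> (p - 1) \<and> card (verts \<Gamma>) = n
              \<and> girth TYPE('k::field) \<Gamma> (p - 1) > enat (2 * p)
              \<and> real (num_faces \<Gamma> p) \<ge> C * real n powr (real p - real p / (2 ^ p - 1))))"
proof (intro exI[of _ "1 / (4 * real p ^ p)"] conjI allI)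
  show "1 / (4 * real p ^ p) > 0" using assms by simp
  fix N :: nat
  define t where "t = Suc N"
  define k :: nat where "k = 2^p - 1"
  define m where "m = t^k"
  define n where "n = p * m"
  define q :: real where "q = 1 / (2 * real t ^ p)"
  have t1: "t \<ge> 1" by (simp add: t_def)
  have "(2::nat)^2 \<le> 2^p" using assms by (intro power_increasing) auto
  then have k1: "k \<ge> 1" by (simp add: k_def)
  have "t \<le> t^k" using t1 k1 by (simp add: self_le_power)
  then have mt: "t \<le> m" by (simp add: m_def)
  have nm: "m \<le> n" using assms by (simp add: n_def)
  have "1 \<le> real t ^ p" using t1 by (simp add: one_le_power)
  then have q01: "0 \<le> q" "q \<le> 1" unfolding q_def by (auto simp: divide_le_eq)
  obtain E where E: "E \<subseteq> Ug p m" "real (card E) - real (card {x \<in> Prs p m. Kc p (fst x) (snd x) \<subseteq> E})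
            \<ge> q * real m ^ p - real m ^ (2*p) * q ^ (2^p)"
    using exists_good[OF q01] by blast
  obtain E' where E': "E' \<subseteq> E" "real (card E') \<ge> real (card E) - real (card {x \<in> Prs p m. Kc p (fst x) (snd x) \<subseteq> E})"
     "\<forall>a b. (a,b) \<in> Prs p m \<longrightarrow> \<not> Kc p a b \<subseteq> E'"
    using deletion[OF E(1)] by blast
  have num: "q * real m ^ p - real m ^ (2*p) * q ^ (2^p) \<ge> real m ^ p / (4 * real t ^ p)"
    using numeric[OF t1 k_def assms q_def] by (simp add: m_def)
  have cE': "real (card E') \<ge> real m ^ p / (4 * real t ^ p)" using E E'(2) num by linarith
  have "real m ^ p / (4 * real t ^ p) > 0" using mt t1 by simp
  then have "E' \<noteq> {}" using cE' by auto
  have E'U: "E' \<subseteq> Ug p m" using E'(1) E(1) by auto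
  note B = cplx_basic[OF E'U assms \<open>E' \<noteq> {}\<close> n_def]
  have G: "girth TYPE('k::field) (cplx p n E') (p - 1) > enat (2 * p)"
    using girth_big[OF E'U assms \<open>E' \<noteq> {}\<close> n_def E'(3)] .
  have P: "1 / (4 * real p ^ p) * real n powr (real p - real p / (2 ^ p - 1)) \<le> real m ^ p / (4 * real t ^ p)"
    using powr_part[OF t1 k_def assms] by (simp add: n_def m_def)
  show "\<exists>n\<ge>N. 0 < n \<and>
           (\<exists>\<Gamma>. simplicial_complex \<Gamma> \<and> has_dim \<Gamma> (p - 1) \<and> card (verts \<Gamma>) = n
              \<and> girth TYPE('k::field) \<Gamma> (p - 1) > enat (2 * p)
              \<and> real (num_faces \<Gamma> p) \<ge> 1 / (4 * real p ^ p) * real n powr (real p - real p / (2 ^ p - 1)))"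
  proof (intro exI[of _ n] conjI exI[of _ "cplx p n E'"])
    show "N \<le> n" using mt nm by (simp add: t_def)
    show "0 < n" using mt nm by (simp add: t_def)
    show "simplicial_complex (cplx p n E')" "has_dim (cplx p n E') (p - 1)" using B by auto
    show "card (verts (cplx p n E')) = n" using B by simp
    show "girth TYPE('k::field) (cplx p n E') (p - 1) > enat (2 * p)" by (rule G)
    show "real (num_faces (cplx p n E') p) \<ge> 1 / (4 * real p ^ p) * real n powr (real p - real p / (2 ^ p - 1))"
      using B(4) P cE' by simp
  qed
qed


end
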